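(* Let $\mathcal{C}$ be a finite or countable alphabet with letter probabilities $(p_\alpha)_{\alpha\in\mathcal{C}}$, $0<p_\alpha<1$, $\sum_\alpha p_\alpha=1$, and let $\mathbb{P}$ be the product measure with these identically distributed marginals. Let $n$ be a positive integer and $k$ a positive integer with $k\le\lfloor n/2\rfloor-1$. Then $\mathbb{P}\Big(\bigcup_{j=k}^{\lfloor n/2\rfloor-1}R_n(j)\Big)=\mathbb{P}\Big(\bigcup_{j=k}^{\lfloor n/2\rfloor-1}R_{2(\lfloor n/2\rfloor-1)}(j)\Big)$.
   Context: $\mathbb{P}(x_1^m)=\prod_{i=1}^m p_{x_i}$ on $\mathcal{C}^m$; $x_a^b=(x_a,\dots,x_b)$. For $1\le j\le m-1$, $R_m(j)=\{x_1^m\in\mathcal{C}^m: x_1^j=x_{m-j+1}^m\}$. *)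

theory Defs
  imports "HOL-Analysis.Analysis"
begin

text \<open>Words of length m over the alphabet (the type 'a) are lists of length m;
  position i (1-based in the paper) is xs ! (i-1).\<close>

definition words :: "nat \<Rightarrow> 'a list set" where
  "words m = {xs. length xs = m}"

definition wprob :: "('a \<Rightarrow> real) \<Rightarrow> nat \<Rightarrow> 'a list set \<Rightarrow> real" where
  "wprob p m A = (\<Sum>\<^sub>\<infinity> xs \<in> A \<inter> words m. \<Prod>i<m. p (xs ! i))"

definition R :: "nat \<Rightarrow> nat \<Rightarrow> 'a list set" where
  "R m j = {xs \<in> words m. take j xs = drop (m - j) xs}"

end

theory Submission
  imports Defs
begin

lemma prod_nth_eq: "(\<Prod>i<length xs. (p::'a \<Rightarrow> real) (xs ! i)) = prod_list (map p xs)"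
  by (induction xs) (simp_all add: prod.lessThan_Suc_shift del: prod.lessThan_Suc)

lemma prod_summable:
  fixes f :: "'a \<Rightarrow> real" and g :: "'b \<Rightarrow> real"
  assumes f0: "\<And>x. x \<in> A \<Longrightarrow> f x \<ge> 0" and g0: "\<And>y. y \<in> B \<Longrightarrow> g y \<ge> 0"
    and fs: "f summable_on A" and gs: "g summable_on B"
  shows "(\<lambda>(x,y). f x * g y) summable_on A \<times> B"
proof (rule nonneg_bdd_above_summable_on)
  show "\<And>z. z \<in> A \<times> B \<Longrightarrow> 0 \<le> (case z of (x, y) \<Rightarrow> f x * g y)"
    using f0 g0 by auto
  show "bdd_above (sum (\<lambda>(x,y). f x * g y) ` {F. F \<subseteq> A \<times> B \<and> finite F})"
  proof (rule bdd_aboveI2)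
    fix F assume F: "F \<in> {F. F \<subseteq> A \<times> B \<and> finite F}"
    hence fin: "finite F" and sub: "F \<subseteq> A \<times> B" by auto
    have s1: "fst ` F \<subseteq> A" "snd ` F \<subseteq> B" using sub by auto
    have "sum (\<lambda>(x,y). f x * g y) F \<le> sum (\<lambda>(x,y). f x * g y) (fst ` F \<times> snd ` F)"
    proof (rule sum_mono2)
      show "F \<subseteq> fst ` F \<times> snd ` F" by (force intro: rev_image_eqI)
    qed (use fin s1 f0 g0 in \<open>auto intro!: mult_nonneg_nonneg\<close>)
    also have "\<dots> = sum f (fst ` F) * sum g (snd ` F)"
      by (simp add: sum_product sum.cartesian_product)
    also have "\<dots> \<le> infsum f A * infsum g B"
      apply (rule mult_mono)
      using fin s1 f0 g0 fs gs
      by (auto intro!: finite_sum_le_infsum sum_nonneg infsum_nonneg)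
    finally show "sum (\<lambda>(x,y). f x * g y) F \<le> infsum f A * infsum g B" .
  qed
qed

lemma prod_infsum:
  fixes f :: "'a \<Rightarrow> real" and g :: "'b \<Rightarrow> real"
  assumes "(\<lambda>(x,y). f x * g y) summable_on A \<times> B"
  shows "infsum (\<lambda>(x,y). f x * g y) (A \<times> B) = infsum f A * infsum g B"
proof -
  have "infsum (\<lambda>(x,y). f x * g y) (A \<times> B) = infsum (\<lambda>x. infsum (\<lambda>y. f x * g y) B) A"
    using infsum_Sigma'_banach[of "\<lambda>x y. f x * g y" A "\<lambda>_. B"] assms by simp
  also have "\<dots> = infsum (\<lambda>x. f x * infsum g B) A"
    by (simp add: infsum_cmult_right')
  also have "\<dots> = infsum f A * infsum g B"
    by (simp add: infsum_cmult_left')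
  finally show ?thesis .
qed

definition ins :: "nat \<Rightarrow> 'a list \<times> 'a \<Rightarrow> 'a list" where
  "ins h z = take h (fst z) @ snd z # drop h (fst z)"

lemma ins_inj:
  assumes "\<forall>xs\<in>S. h \<le> length xs"
  shows "inj_on (ins h) (S \<times> UNIV)"
proof (rule inj_onI)
  fix u v assume u: "u \<in> S \<times> UNIV" and v: "v \<in> S \<times> UNIV" and e: "ins h u = ins h v"
  obtain xs a where [simp]: "u = (xs,a)" by (cases u)
  obtain ys b where [simp]: "v = (ys,b)" by (cases v)
  have l: "h \<le> length xs" "h \<le> length ys" using u v assms by auto
  have "take h (ins h u) = take h xs" "take h (ins h v) = take h ys"
    using l by (auto simp: ins_def)
  hence t: "take h xs = take h ys" using e by simp
  have "drop h (ins h u) = a # drop h xs" "drop h (ins h v) = b # drop h ys"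
    using l by (auto simp: ins_def)
  hence "a = b" "drop h xs = drop h ys" using e by auto
  with t show "u = v" by (metis \<open>u = (xs,a)\<close> \<open>v = (ys,b)\<close> append_take_drop_id)
qed

lemma ins_weight: "prod_list (map p (ins h (xs,a))) = prod_list (map p xs) * (p a :: real)"
proof -
  have "prod_list (map p (ins h (xs,a))) = prod_list (map p (take h xs)) * p a * prod_list (map p (drop h xs))"
    by (simp add: ins_def)
  also have "\<dots> = prod_list (map p (take h xs @ drop h xs)) * p a"
    by (simp only: map_append prod_list.append) (simp add: algebra_simps)
  finally show ?thesis by simp
qed

lemma ins_step:
  fixes p :: "'a \<Rightarrow> real"
  assumes p0: "\<And>a. 0 \<le> p a" and ps: "(p has_sum 1) UNIV"
    and ws: "(\<lambda>xs. prod_list (map p xs)) summable_on S" and hl: "\<forall>xs\<in>S. h \<le> length xs"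
  shows "(\<lambda>xs. prod_list (map p xs)) summable_on (ins h ` (S \<times> UNIV))
     \<and> infsum (\<lambda>xs. prod_list (map p xs)) (ins h ` (S \<times> UNIV)) = infsum (\<lambda>xs. prod_list (map p xs)) S"
proof -
  let ?w = "\<lambda>xs. prod_list (map p xs)"
  have inj: "inj_on (ins h) (S \<times> UNIV)" using ins_inj[OF hl] .
  have comp: "?w \<circ> ins h = (\<lambda>(xs,a). ?w xs * p a)"
    by (auto simp: fun_eq_iff ins_weight)
  have pss: "p summable_on UNIV" using ps by (auto simp: summable_on_def)
  have w0: "\<And>xs. 0 \<le> ?w xs" using p0 by (intro prod_list_nonneg) auto
  have sm: "(\<lambda>(xs,a). ?w xs * p a) summable_on S \<times> UNIV"
    by (rule prod_summable[OF w0 p0 ws pss])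
  show ?thesis
  proof
    show "?w summable_on (ins h ` (S \<times> UNIV))"
    proof -
      have "(?w \<circ> ins h) summable_on S \<times> UNIV" using sm comp by simp
      thus ?thesis using summable_on_reindex[OF inj] by blast
    qed
    have "infsum ?w (ins h ` (S \<times> UNIV)) = infsum (\<lambda>(xs,a). ?w xs * p a) (S \<times> UNIV)"
      using infsum_reindex[OF inj, of ?w] comp by metis
    also have "\<dots> = infsum ?w S * infsum p UNIV" by (rule prod_infsum[OF sm])
    also have "\<dots> = infsum ?w S" using ps infsumI by fastforce
    finally show "infsum ?w (ins h ` (S \<times> UNIV)) = infsum ?w S" .
  qed
qed

lemma words_sum:
  fixes p :: "'a \<Rightarrow> real"
  assumes p0: "\<And>a. 0 \<le> p a" and ps: "(p has_sum 1) UNIV"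
  shows "(\<lambda>xs. prod_list (map p xs)) summable_on {xs. length xs = m}
     \<and> infsum (\<lambda>xs. prod_list (map p xs)) {xs. length xs = m} = 1"
proof (induction m)
  case 0
  have "{xs::'a list. length xs = 0} = {[]}" by auto
  then show ?case by simp
next
  case (Suc m)
  have e: "{xs::'a list. length xs = Suc m} = ins 0 ` ({xs. length xs = m} \<times> UNIV)"
  proof
    show "{xs::'a list. length xs = Suc m} \<subseteq> ins 0 ` ({xs. length xs = m} \<times> UNIV)"
    proof
      fix ys :: "'a list" assume "ys \<in> {xs. length xs = Suc m}"
      then obtain a xs where "ys = a # xs" "length xs = m" by (cases ys) auto
      then show "ys \<in> ins 0 ` ({xs. length xs = m} \<times> UNIV)"
        by (intro rev_image_eqI[of "(xs,a)"]) (auto simp: ins_def)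
    qed
  qed (auto simp: ins_def)
  show ?case using ins_step[OF p0 ps, of "{xs. length xs = m}" 0] Suc e by simp
qed

definition TT :: "nat \<Rightarrow> ('a list \<Rightarrow> 'a list \<Rightarrow> bool) \<Rightarrow> nat \<Rightarrow> 'a list set" where
  "TT h Q r = {xs. length xs = 2*h+r \<and> Q (take h xs) (drop (h+r) xs)}"

lemma TT_Suc: "TT h Q (Suc r) = ins h ` (TT h Q r \<times> UNIV)"
proof
  show "ins h ` (TT h Q r \<times> UNIV) \<subseteq> TT h Q (Suc r)"
  proof
    fix ys assume "ys \<in> ins h ` (TT h Q r \<times> UNIV)"
    then obtain xs a where xs: "xs \<in> TT h Q r" and ys: "ys = ins h (xs,a)" by auto
    have l: "length xs = 2*h+r" and q: "Q (take h xs) (drop (h+r) xs)" using xs by (auto simp: TT_def)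
    have "length ys = 2*h + Suc r" using l by (simp add: ys ins_def)
    moreover have "take h ys = take h xs" using l by (simp add: ys ins_def)
    moreover have "drop (h + Suc r) ys = drop (h+r) xs" using l by (simp add: ys ins_def add.commute)
    ultimately show "ys \<in> TT h Q (Suc r)" using q by (simp add: TT_def)
  qed
  show "TT h Q (Suc r) \<subseteq> ins h ` (TT h Q r \<times> UNIV)"
  proof
    fix ys assume ys: "ys \<in> TT h Q (Suc r)"
    have l: "length ys = 2*h + Suc r" and q: "Q (take h ys) (drop (h + Suc r) ys)" using ys by (auto simp: TT_def)
    define xs where "xs = take h ys @ drop (Suc h) ys"
    have "length xs = 2*h+r" using l by (simp add: xs_def)
    moreover have "take h xs = take h ys" using l by (simp add: xs_def)
    moreover have "drop (h+r) xs = drop (h + Suc r) ys" using l by (simp add: xs_def add.commute)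
    ultimately have "xs \<in> TT h Q r" using q by (simp add: TT_def)
    moreover have "ins h (xs, ys ! h) = ys"
      using l by (simp add: xs_def ins_def id_take_nth_drop[symmetric])
    ultimately show "ys \<in> ins h ` (TT h Q r \<times> UNIV)" by (metis UNIV_I mem_Sigma_iff rev_image_eqI)
  qed
qed

lemma TT_const:
  fixes p :: "'a \<Rightarrow> real"
  assumes p0: "\<And>a. 0 \<le> p a" and ps: "(p has_sum 1) UNIV"
  shows "infsum (\<lambda>xs. prod_list (map p xs)) (TT h Q r) = infsum (\<lambda>xs. prod_list (map p xs)) (TT h Q 0)"
proof (induction r)
  case (Suc r)
  have sub: "TT h Q r \<subseteq> {xs. length xs = 2*h+r}" by (auto simp: TT_def)
  have sm: "(\<lambda>xs. prod_list (map p xs)) summable_on TT h Q r"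
    using summable_on_subset_banach[OF conjunct1[OF words_sum[OF p0 ps]] sub] .
  have "\<forall>xs\<in>TT h Q r. h \<le> length xs" by (auto simp: TT_def)
  then show ?case using ins_step[OF p0 ps sm] Suc TT_Suc by metis
qed simp

lemma wprob_eq: "wprob p m A = infsum (\<lambda>xs. prod_list (map p xs)) (A \<inter> words m)"
  unfolding wprob_def by (rule infsum_cong) (auto simp: words_def prod_nth_eq[symmetric])

lemma union_eq:
  assumes "2*h \<le> m"
  shows "(\<Union>j\<in>{k..h}. R m j) \<inter> words m
     = TT h (\<lambda>u t. \<exists>j\<in>{k..h}. take j u = drop (h-j) t) (m - 2*h)"
proof -
  have "take j xs = drop (m-j) xs \<longleftrightarrow> take j (take h xs) = drop (h-j) (drop (h + (m-2*h)) xs)"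
    if "length xs = m" "j \<in> {k..h}" for xs :: "'a list" and j
  proof -
    have "take j (take h xs) = take j xs" using that by (simp add: min_def)
    moreover have "drop (h-j) (drop (h + (m-2*h)) xs) = drop (m-j) xs"
      using that assms by (simp add: add.commute)
    ultimately show ?thesis by simp
  qed
  then show ?thesis using assms by (auto simp: R_def words_def TT_def)
qed

theorem lemma3:
  fixes p :: "'a::countable \<Rightarrow> real" and n k :: nat
  assumes "\<And>a. 0 < p a \<and> p a < 1"
    and "(p has_sum 1) UNIV"
    and "0 < n" and "0 < k" and "k \<le> n div 2 - 1"
  shows "wprob p n (\<Union>j\<in>{k..n div 2 - 1}. R n j)
       = wprob p (2 * (n div 2 - 1)) (\<Union>j\<in>{k..n div 2 - 1}. R (2 * (n div 2 - 1)) j)"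
proof -
  define h where "h = n div 2 - 1"
  have p0: "\<And>a. 0 \<le> p a" using assms(1) less_imp_le by blast
  have "2*h \<le> n" unfolding h_def by linarith
  have e1: "(\<Union>j\<in>{k..h}. R n j) \<inter> words n = TT h (\<lambda>u t. \<exists>j\<in>{k..h}. take j u = drop (h-j) t) (n - 2*h)"
    using union_eq[of h n k] \<open>2*h \<le> n\<close> by blast
  have e2: "(\<Union>j\<in>{k..h}. R (2*h) j) \<inter> words (2*h) = TT h (\<lambda>u t. \<exists>j\<in>{k..h}. take j u = drop (h-j) t) 0"
    using union_eq[of h "2*h" k] by simp
  show ?thesis
    unfolding h_def[symmetric] wprob_eq e1 e2 by (rule TT_const[OF p0 assms(2)])
qed

end
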